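(* Let $0<q_1<q_2<1$, $a,b,c\in\mathbb{R}$, and consider the complex-valued function $$\Delta(s)=s^{q_1+q_2}+as^{q_2}+bs^{q_1}+c,$$ where $s^{q_1},s^{q_2},s^{q_1+q_2}$ are principal values of the complex power functions. 1. If $c<0$, then $\Delta(s)$ has at least one positive real root. 2. $\Delta(0)=0$ if and only if $c=0$. 3. Assume $c>0$, and let $a^\star_{c,q_1,q_2}:\mathbb{R}\to\mathbb{R}$ be the function whose graph (in the $(b,a)$-plane) is the curve $b=\rho_1\omega^{q_2}-c\rho_2\omega^{-q_1}$, $a=c\rho_1\omega^{-q_2}-\rho_2\omega^{q_1}$, $\omega>0$, where $\rho_1=\sin\frac{q_1\pi}{2}/\sin\frac{(q_2-q_1)\pi}{2}$ and $\rho_2=\sin\frac{q_2\pi}{2}/\sin\frac{(q_2-q_1)\pi}{2}$; write $a^\star(b,c,q_1,q_2)=a^\star_{c,q_1,q_2}(b)$. Then: (a) if $a\ge 0$ and $b\ge 0$, all roots of $\Delta(s)$ satisfy $\Re(s)<0$; (b) $\Delta(s)$ has a pair of pure imaginary roots if and only if $a=a^\star(b,c,q_1,q_2)$; (c) if $s=s(a,b,c,q_1,q_2)$ is a root of $\Delta(s)$, depending differentiably on $a$, such that $\Re(s(a^\star,b,c,q_1,q_2))=0$ where $a^\star=a^\star(b,c,q_1,q_2)$, then the transversality condition $\frac{\partial \Re(s)}{\partial a}\big|_{a=a^\star}<0$ holds; (d) all roots of $\Delta(s)$ are in the open left half-plane if and only if $a>a^\star(b,c,q_1,q_2)$; (e)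 $\Delta(s)$ has a pair of roots in the open right half-plane if and only if $a<a^\star(b,c,q_1,q_2)$.
   Context: Principal value: $s^{q}=|s|^q e^{iq\arg(s)}$ with $\arg(s)\in(-\pi,\pi]$ (and $0^q=0$). The curve described in part 3 is the graph of a bijective decreasing function $\mathbb{R}\to\mathbb{R}$, so $a^\star_{c,q_1,q_2}$ is well defined. *)

theory Defs
  imports "HOL-Analysis.Analysis"
begin

text \<open>Characteristic function with principal complex powers
  (complex powr: 0 powr w = 0, otherwise exp (w * Ln z), Ln principal).\<close>
definition Delta :: "real \<Rightarrow> real \<Rightarrow> real \<Rightarrow> real \<Rightarrow> real \<Rightarrow> complex \<Rightarrow> complex" where
  "Delta q1 q2 a b c s =
     s powr (complex_of_real (q1 + q2)) + complex_of_real a * s powr (complex_of_real q2)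
     + complex_of_real b * s powr (complex_of_real q1) + complex_of_real c"

definition rho1 :: "real \<Rightarrow> real \<Rightarrow> real" where
  "rho1 q1 q2 = sin (q1 * pi / 2) / sin ((q2 - q1) * pi / 2)"

definition rho2 :: "real \<Rightarrow> real \<Rightarrow> real" where
  "rho2 q1 q2 = sin (q2 * pi / 2) / sin ((q2 - q1) * pi / 2)"

definition astar :: "real \<Rightarrow> real \<Rightarrow> real \<Rightarrow> real \<Rightarrow> real" where
  "astar b c q1 q2 = (THE a. \<exists>\<omega>>0.
      b = rho1 q1 q2 * \<omega> powr q2 - c * rho2 q1 q2 * \<omega> powr (- q1) \<and>
      a = c * rho1 q1 q2 * \<omega> powr (- q2) - rho2 q1 q2 * \<omega> powr q1)"

end

theory Submission
  imports Defs
begin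


lemma Ln_rcis: assumes "r > 0" "-pi < t" "t \<le> pi"
  shows "Ln (rcis r t) = complex_of_real (ln r) + \<i> * complex_of_real t"
proof (rule Ln_unique)
  show "exp (complex_of_real (ln r) + \<i> * complex_of_real t) = rcis r t"
    using assms by (simp add: exp_add rcis_def cis_conv_exp exp_of_real)
qed (use assms in auto)

lemma powr_rcis: assumes "r > 0" "-pi < t" "t \<le> pi"
  shows "rcis r t powr complex_of_real q = rcis (r powr q) (q * t)"
proof -
  have "rcis r t \<noteq> 0" using assms by simp
  then have "rcis r t powr complex_of_real q = exp (complex_of_real q * (complex_of_real (ln r) + \<i> * complex_of_real t))"
    by (simp add: powr_def Ln_rcis assms)
  also have "\<dots> = exp (complex_of_real (q * ln r)) * exp (\<i> * complex_of_real (q*t))"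
    by (simp add: exp_add[symmetric] algebra_simps)
  also have "\<dots> = rcis (r powr q) (q * t)"
    using assms by (simp add: rcis_def cis_conv_exp powr_def exp_of_real[symmetric])
  finally show ?thesis .
qed



locale prm =
  fixes q1 q2 b c :: real
  assumes q1: "0 < q1" and q12: "q1 < q2" and q2: "q2 < 1" and cpos: "0 < c"
begin

definition G :: "complex \<Rightarrow> complex" where
  "G s = -(s powr complex_of_real q1 + complex_of_real b * s powr complex_of_real (q1 - q2)
          + complex_of_real c * s powr complex_of_real (- q2))"

definition X :: "real \<Rightarrow> real \<Rightarrow> real" where
  "X r t = -(r powr q1 * cos (q1*t) + b * r powr (q1-q2) * cos ((q2-q1)*t) + c * r powr (-q2) * cos (q2*t))"

definition H :: "real \<Rightarrow> real \<Rightarrow> real" where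
  "H r t = r powr q2 * sin (q1*t) - c * r powr (-q1) * sin (q2*t) - b * sin ((q2-q1)*t)"

lemma Delta_G:
  assumes "s \<noteq> 0"
  shows "Delta q1 q2 a b c s = s powr complex_of_real q2 * (complex_of_real a - G s)"
proof -
  have e1: "s powr complex_of_real (q1+q2) = s powr complex_of_real q1 * s powr complex_of_real q2"
    by (simp add: powr_add)
  have e2: "s powr complex_of_real q1 = s powr complex_of_real (q1-q2) * s powr complex_of_real q2"
    by (simp add: powr_add[symmetric])
  have e3: "s powr complex_of_real (-q2) * s powr complex_of_real q2 = 1"
    using assms by (simp add: powr_add[symmetric])
  define P where "P = s powr complex_of_real q2"
  define U where "U = s powr complex_of_real (q1-q2)"
  define W where "W = s powr complex_of_real (-q2)"
  have "Delta q1 q2 a b c s = U*P*P + complex_of_real a * P + complex_of_real b * (U*P) + complex_of_real c * (W*P)"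
    unfolding Delta_def P_def U_def W_def e1 e3 by (simp only: e2 mult_1_right)
  also have "\<dots> = P * (complex_of_real a - G s)"
    unfolding G_def P_def[symmetric] U_def[symmetric] W_def[symmetric] e2 by (simp add: algebra_simps)
  finally show ?thesis unfolding P_def .
qed

lemma Delta_zero_iff:
  assumes "s \<noteq> 0"
  shows "Delta q1 q2 a b c s = 0 \<longleftrightarrow> G s = complex_of_real a"
proof -
  have "s powr complex_of_real q2 \<noteq> 0" using assms by (simp add: powr_def)
  then show ?thesis using assms by (simp add: Delta_G) (rule eq_commute)
qed

lemma G_rcis:
  assumes "r > 0" "-pi < t" "t \<le> pi"
  shows "G (rcis r t) = Complex (X r t) (- (r powr (q1-q2) * H r t))"
proof -
  have pa: "r powr (q1-q2) * r powr q2 = r powr q1" "r powr (q1-q2) * r powr (-q1) = r powr (-q2)"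
    by (simp_all add: powr_add[symmetric])
  have e: "(q1-q2)*t = -((q2-q1)*t)" "(-q2)*t = -(q2*t)" by (simp_all add: algebra_simps)
  have ca: "cos ((q1-q2)*t) = cos ((q2-q1)*t)" "sin ((q1-q2)*t) = - sin ((q2-q1)*t)"
    "cos ((-q2)*t) = cos (q2*t)" "sin ((-q2)*t) = - sin (q2*t)"
      by (simp_all only: e cos_minus sin_minus)
  have "G (rcis r t) = - (rcis (r powr q1) (q1*t) + complex_of_real b * rcis (r powr (q1-q2)) ((q1-q2)*t)
         + complex_of_real c * rcis (r powr (-q2)) ((-q2)*t))"
    unfolding G_def powr_rcis[OF assms] by (rule refl)
  also have "\<dots> = Complex (X r t) (- (r powr (q1-q2) * H r t))"
  proof (rule complex_eqI)
    show "Re (- (rcis (r powr q1) (q1*t) + complex_of_real b * rcis (r powr (q1-q2)) ((q1-q2)*t)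
         + complex_of_real c * rcis (r powr (-q2)) ((-q2)*t))) = Re (Complex (X r t) (- (r powr (q1-q2) * H r t)))"
      unfolding X_def by (simp add: ca)
    have "r powr (q1-q2) * H r t = r powr (q1-q2) * r powr q2 * sin (q1*t) - c * (r powr (q1-q2) * r powr (-q1)) * sin (q2*t)
         - b * r powr (q1-q2) * sin ((q2-q1)*t)" unfolding H_def by (simp only: algebra_simps)
    also have "\<dots> = r powr q1 * sin (q1*t) - c * r powr (-q2) * sin (q2*t) - b * r powr (q1-q2) * sin ((q2-q1)*t)"
      by (simp only: pa)
    finally have hh: "r powr (q1-q2) * H r t = r powr q1 * sin (q1*t) - c * r powr (-q2) * sin (q2*t) - b * r powr (q1-q2) * sin ((q2-q1)*t)" .
    show "Im (- (rcis (r powr q1) (q1*t) + complex_of_real b * rcis (r powr (q1-q2)) ((q1-q2)*t)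
         + complex_of_real c * rcis (r powr (-q2)) ((-q2)*t))) = Im (Complex (X r t) (- (r powr (q1-q2) * H r t)))"
      unfolding hh by (simp add: ca algebra_simps sin_diff)
  qed
  finally show ?thesis .
qed

end



lemma pw_mono:
  fixes al be ga p1 p2 x y :: real
  assumes "al > 0" "be > 0" "p1 > 0" "p2 > 0" "0 < x" "x < y"
  shows "al * x powr p2 - be * x powr (-p1) - ga < al * y powr p2 - be * y powr (-p1) - ga"
proof -
  have "x powr p2 < y powr p2" using assms by (simp add: powr_less_mono2)
  moreover have "y powr (-p1) < x powr (-p1)" using assms by (simp add: powr_less_mono2_neg)
  ultimately show ?thesis using assms by (smt (verit) mult_strict_left_mono)
qed

lemma pw_zero:
  fixes al be ga p1 p2 :: real
  assumes "al > 0" "be > 0" "p1 > 0" "p2 > 0"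
  shows "\<exists>r>0. al * r powr p2 - be * r powr (-p1) - ga = 0"
proof -
  define hi where "hi = ((\<bar>ga\<bar> + be) / al + 1) powr (1/p2)"
  define lo where "lo = ((al + \<bar>ga\<bar>) / be + 1) powr (-1/p1)"
  let ?f = "\<lambda>r. al * r powr p2 - be * r powr (-p1) - ga"
  have hi1: "hi powr p2 = (\<bar>ga\<bar> + be) / al + 1" unfolding hi_def
    using assms by (simp add: powr_powr add_pos_nonneg)
  have lo1: "lo powr (-p1) = (al + \<bar>ga\<bar>) / be + 1" unfolding lo_def
    using assms by (simp add: powr_powr add_pos_nonneg)
  have pp: "(\<bar>ga\<bar> + be) / al + 1 > 0" "(al + \<bar>ga\<bar>) / be + 1 > 0" using assms by (simp_all add: add_pos_nonneg)
  have hipos: "hi > 0" "lo > 0" unfolding hi_def lo_def using pp by simp_all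
  have "hi powr p2 > 1" using hi1 assms by (simp add: add_pos_nonneg)
  then have hig: "hi > 1" using assms hipos powr_le1[of p2 hi] by force
  have "lo powr (-p1) > 1" using lo1 assms by (simp add: add_pos_nonneg)
  then have lol: "lo < 1"
  proof (rule contrapos_pp)
    assume "\<not> lo < 1"
    then have "lo = 1 \<or> lo > 1" by auto
    then show "\<not> lo powr (-p1) > 1" using assms powr_less_one[of lo "-p1"] by auto
  qed
  have a1: "hi powr (-p1) < 1" using hig assms by (simp add: powr_less_one)
  have a2: "lo powr p2 < 1" using lol hipos assms by (simp add: powr01_less_one)
  have fhi: "?f hi > 0"
  proof -
    have "al * hi powr p2 = \<bar>ga\<bar> + be + al" using hi1 assms by (simp add: field_simps)
    moreover have "be * hi powr (-p1) < be" using a1 assms by simp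
    moreover have "ga \<le> \<bar>ga\<bar>" by simp
    ultimately show ?thesis using assms by linarith
  qed
  have flo: "?f lo < 0"
  proof -
    have "be * lo powr (-p1) = al + \<bar>ga\<bar> + be" using lo1 assms by (simp add: field_simps)
    moreover have "al * lo powr p2 < al" using a2 assms by simp
    moreover have "- ga \<le> \<bar>ga\<bar>" by simp
    ultimately show ?thesis using assms by linarith
  qed
  have "lo \<le> hi" using hig lol by simp
  moreover have "continuous_on {lo..hi} ?f" using hipos
    by (intro continuous_intros) auto
  ultimately obtain r where "r \<ge> lo" "r \<le> hi" "?f r = 0" using IVT'[of ?f lo 0 hi] flo fhi by auto
  then show ?thesis using hipos by (intro exI[of _ r]) auto
qed

lemma track:
  fixes g :: "'a \<Rightarrow> real \<Rightarrow> real" and Z :: "'a \<Rightarrow> real"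
  assumes ev: "\<forall>\<^sub>F s in F. Z s > 0 \<and> g s (Z s) = 0 \<and> (\<forall>x y. 0 < x \<longrightarrow> x < y \<longrightarrow> g s x < g s y)"
    and lim: "\<And>r. r > 0 \<Longrightarrow> ((\<lambda>s. g s r) \<longlongrightarrow> gl r) F"
    and zl: "zl > 0" "gl zl = 0" and m0: "\<And>x y. 0 < x \<Longrightarrow> x < y \<Longrightarrow> gl x < gl y"
  shows "(Z \<longlongrightarrow> zl) F"
proof (rule tendstoI)
  fix e :: real assume e: "e > 0"
  define ep where "ep = min (e/2) (zl/2)"
  have ep: "ep > 0" "ep < e" "zl - ep > 0" unfolding ep_def using e zl by auto
  have "gl (zl - ep) < 0" using m0[of "zl-ep" zl] ep zl by auto
  then have e1: "\<forall>\<^sub>F s in F. g s (zl - ep) < 0"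
    using lim[of "zl-ep"] ep by (simp add: order_tendstoD)
  have "gl (zl + ep) > 0" using m0[of zl "zl+ep"] ep zl by auto
  then have e2: "\<forall>\<^sub>F s in F. g s (zl + ep) > 0"
    using lim[of "zl+ep"] ep zl by (simp add: order_tendstoD)
  show "\<forall>\<^sub>F s in F. dist (Z s) zl < e"
    using ev e1 e2
  proof eventually_elim
    case (elim s)
    then have Zp: "Z s > 0" "g s (Z s) = 0" and mono: "\<And>x y. 0 < x \<Longrightarrow> x < y \<Longrightarrow> g s x < g s y" by auto
    have "\<not> Z s \<le> zl - ep"
    proof
      assume "Z s \<le> zl - ep"
      then have "g s (Z s) \<le> g s (zl - ep)" using mono[of "Z s" "zl-ep"] Zp by (cases "Z s = zl - ep") auto
      then show False using elim Zp by auto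
    qed
    moreover have "\<not> Z s \<ge> zl + ep"
    proof
      assume "Z s \<ge> zl + ep"
      then have "g s (Z s) \<ge> g s (zl + ep)" using mono[of "zl+ep" "Z s"] Zp ep by (cases "Z s = zl + ep") auto
      then show False using elim Zp by auto
    qed
    ultimately show ?case using ep by (simp add: dist_real_def abs_if)
  qed
qed



lemma mvt_gen:
  fixes f f' :: "real \<Rightarrow> real"
  assumes "\<And>z. min x y \<le> z \<Longrightarrow> z \<le> max x y \<Longrightarrow> (f has_real_derivative f' z) (at z)"
  shows "\<exists>z. min x y \<le> z \<and> z \<le> max x y \<and> f y - f x = (y - x) * f' z"
proof (cases x y rule: linorder_cases)
  case less
  then obtain z where "z > x" "z < y" "f y - f x = (y - x) * f' z"
    using MVT2[of x y f f'] assms by auto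
  then show ?thesis using less by (intro exI[of _ z]) auto
next
  case equal then show ?thesis by auto
next
  case greater
  then obtain z where "z > y" "z < x" "f x - f y = (x - y) * f' z"
    using MVT2[of y x f f'] assms by auto
  then show ?thesis using greater by (intro exI[of _ z]) (auto simp: algebra_simps)
qed

lemma squeeze:
  fixes f g :: "'a \<Rightarrow> real"
  assumes "\<forall>\<^sub>F x in F. \<bar>f x - L\<bar> \<le> g x" "(g \<longlongrightarrow> 0) F"
  shows "(f \<longlongrightarrow> L) F"
proof -
  have "((\<lambda>x. f x - L) \<longlongrightarrow> 0) F"
    by (rule Lim_null_comparison[OF _ assms(2)]) (use assms(1) in auto)
  then show ?thesis by (rule LIM_zero_cancel)
qed

context prm begin

definition Hr :: "real \<Rightarrow> real \<Rightarrow> real" where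
  "Hr r t = q2 * r powr (q2-1) * sin (q1*t) + c*q1 * r powr (-q1-1) * sin (q2*t)"
definition Hp :: "real \<Rightarrow> real \<Rightarrow> real" where
  "Hp r t = q1 * r powr q2 * cos (q1*t) - c*q2 * r powr (-q1) * cos (q2*t) - b*(q2-q1) * cos ((q2-q1)*t)"
definition Xr :: "real \<Rightarrow> real \<Rightarrow> real" where
  "Xr r t = -(q1 * r powr (q1-1) * cos (q1*t) + b*(q1-q2) * r powr (q1-q2-1) * cos ((q2-q1)*t)
             - c*q2 * r powr (-q2-1) * cos (q2*t))"
definition Xp :: "real \<Rightarrow> real \<Rightarrow> real" where
  "Xp r t = q1 * r powr q1 * sin (q1*t) + b*(q2-q1) * r powr (q1-q2) * sin ((q2-q1)*t) + c*q2 * r powr (-q2) * sin (q2*t)"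

lemma dH_r: "r > 0 \<Longrightarrow> ((\<lambda>r. H r t) has_real_derivative Hr r t) (at r)"
  unfolding H_def Hr_def
  by (rule derivative_eq_intros refl | simp)+

lemma dH_t: "((\<lambda>t. H r t) has_real_derivative Hp r t) (at t)"
  unfolding H_def Hp_def
  by (rule derivative_eq_intros refl | simp)+

lemma dX:
  assumes "(R has_real_derivative R') (at t)" "R t > 0"
  shows "((\<lambda>t. X (R t) t) has_real_derivative (Xr (R t) t * R' + Xp (R t) t)) (at t)"
  unfolding X_def Xr_def Xp_def
  by (rule derivative_eq_intros refl assms | simp add: assms)+ (simp add: algebra_simps)

lemma pows:
  assumes "r > 0"
  shows "r powr (q1-q2) = r powr q1 / r powr q2" "r powr (-q2) = 1 / r powr q2" "r powr (-q1) = 1 / r powr q1"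
    "r powr (q2-1) = r powr q2 / r" "r powr (-q1-1) = 1 / (r powr q1 * r)" "r powr (q1-1) = r powr q1 / r"
    "r powr (q1-q2-1) = r powr q1 / (r powr q2 * r)" "r powr (-q2-1) = 1 / (r powr q2 * r)"
    "r powr (q1-q2+1) = r powr q1 * r / r powr q2"
  using assms by (simp_all add: powr_diff powr_add powr_minus_divide)

lemma Xr_eq: "r > 0 \<Longrightarrow> Xr r t = - (r powr (q1-q2-1) * Hp r t)"
  unfolding Xr_def Hp_def
  by (simp only: pows) (simp add: field_simps)

lemma Xp_eq: "r > 0 \<Longrightarrow> Xp r t = r powr (q1-q2+1) * Hr r t - (q2-q1) * r powr (q1-q2) * H r t"
  unfolding Xp_def Hr_def H_def
  by (simp only: pows) (simp add: field_simps)

lemma sinpos: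
  assumes "0 < t" "t < pi"
  shows "sin (q1*t) > 0" "sin (q2*t) > 0" "sin ((q2-q1)*t) > 0"
proof -
  have "q1 * t < pi" using assms q1 q12 q2 by (smt (verit) mult_less_cancel_right2)
  then show "sin (q1*t) > 0" using assms q1 by (intro sin_gt_zero) auto
  have "q2 * t < pi" using assms q1 q12 q2 by (smt (verit) mult_less_cancel_right2)
  then show "sin (q2*t) > 0" using assms q1 q12 by (intro sin_gt_zero) auto
  have "(q2-q1) * t < pi" using assms q1 q12 q2 by (smt (verit) mult_less_cancel_right2)
  then show "sin ((q2-q1)*t) > 0" using assms q1 q12 by (intro sin_gt_zero) auto
qed

lemma H_form: "H r t = sin (q1*t) * r powr q2 - (c * sin (q2*t)) * r powr (-q1) - b * sin ((q2-q1)*t)"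
  unfolding H_def by (simp add: algebra_simps)

lemma H_mono: "0 < t \<Longrightarrow> t < pi \<Longrightarrow> 0 < x \<Longrightarrow> x < y \<Longrightarrow> H x t < H y t"
  unfolding H_form using sinpos[of t] cpos q1 q12
  by (intro pw_mono) auto

lemma H_zero_ex: "0 < t \<Longrightarrow> t < pi \<Longrightarrow> \<exists>r>0. H r t = 0"
  unfolding H_form using sinpos[of t] cpos q1 q12
  by (intro pw_zero) auto

definition Rz :: "real \<Rightarrow> real" where "Rz t = (THE r. r > 0 \<and> H r t = 0)"

lemma H_zero_unique: "0 < t \<Longrightarrow> t < pi \<Longrightarrow> x > 0 \<Longrightarrow> y > 0 \<Longrightarrow> H x t = 0 \<Longrightarrow> H y t = 0 \<Longrightarrow> x = y"
  using H_mono[of t x y] H_mono[of t y x] by (cases x y rule: linorder_cases) auto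

lemma Rz: assumes "0 < t" "t < pi" shows "Rz t > 0" "H (Rz t) t = 0"
proof -
  obtain r where r: "r > 0" "H r t = 0" using H_zero_ex assms by blast
  have "Rz t = r" unfolding Rz_def
    by (rule the_equality) (use r H_zero_unique assms in auto)
  then show "Rz t > 0" "H (Rz t) t = 0" using r by auto
qed

lemma Rz_unique: "0 < t \<Longrightarrow> t < pi \<Longrightarrow> r > 0 \<Longrightarrow> H r t = 0 \<Longrightarrow> Rz t = r"
  using Rz H_zero_unique by blast

lemma Hr_pos: "r > 0 \<Longrightarrow> 0 < t \<Longrightarrow> t < pi \<Longrightarrow> Hr r t > 0"
  unfolding Hr_def using sinpos[of t] q1 q12 cpos
  by (intro add_pos_pos mult_pos_pos) auto

lemma Rz_cont: assumes "0 < t0" "t0 < pi" shows "isCont Rz t0"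
proof -
  have ev: "\<forall>\<^sub>F s in at t0. s \<in> {0<..<pi}" using assms by (intro eventually_at_in_open') auto
  have "(Rz \<longlongrightarrow> Rz t0) (at t0)"
  proof (rule track[where g = "\<lambda>s r. H r s" and gl = "\<lambda>r. H r t0"])
    show "\<forall>\<^sub>F s in at t0. 0 < Rz s \<and> H (Rz s) s = 0 \<and> (\<forall>x y. 0 < x \<longrightarrow> x < y \<longrightarrow> H x s < H y s)"
      using ev by eventually_elim (use Rz H_mono in auto)
    show "((\<lambda>s. H r s) \<longlongrightarrow> H r t0) (at t0)" for r
      unfolding H_def by (intro tendsto_intros)
  qed (use Rz[OF assms] H_mono[OF assms] in auto)
  then show ?thesis by (simp add: isCont_def)
qed

lemma Rz_deriv:
  assumes t0: "0 < t0" "t0 < pi"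
  shows "(Rz has_real_derivative (- Hp (Rz t0) t0 / Hr (Rz t0) t0)) (at t0)"
proof -
  define r0 where "r0 = Rz t0"
  have r0: "r0 > 0" "H r0 t0 = 0" using Rz[OF t0] unfolding r0_def by auto
  have ev: "\<forall>\<^sub>F h in at 0. h \<in> {-t0<..<pi-t0} - {0}" using t0 by (intro eventually_at_in_open) auto
  have "\<forall>h. \<exists>z. (0 < t0+h \<and> t0+h < pi) \<longrightarrow> (min r0 (Rz (t0+h)) \<le> z \<and> z \<le> max r0 (Rz (t0+h))
      \<and> H (Rz (t0+h)) (t0+h) - H r0 (t0+h) = (Rz (t0+h) - r0) * Hr z (t0+h))"
  proof (intro allI)
    fix h
    show "\<exists>z. (0 < t0+h \<and> t0+h < pi) \<longrightarrow> (min r0 (Rz (t0+h)) \<le> z \<and> z \<le> max r0 (Rz (t0+h))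
      \<and> H (Rz (t0+h)) (t0+h) - H r0 (t0+h) = (Rz (t0+h) - r0) * Hr z (t0+h))"
    proof (cases "0 < t0+h \<and> t0+h < pi")
      case True
      then have "Rz (t0+h) > 0" using Rz by auto
      then have "\<exists>z. min r0 (Rz (t0+h)) \<le> z \<and> z \<le> max r0 (Rz (t0+h))
      \<and> H (Rz (t0+h)) (t0+h) - H r0 (t0+h) = (Rz (t0+h) - r0) * Hr z (t0+h)"
        using r0 by (intro mvt_gen[where f = "\<lambda>r. H r (t0+h)"] dH_r) auto
      then show ?thesis by blast
    qed auto
  qed
  then obtain xi where xi: "\<And>h. 0 < t0+h \<Longrightarrow> t0+h < pi \<Longrightarrow> min r0 (Rz (t0+h)) \<le> xi h \<and> xi h \<le> max r0 (Rz (t0+h))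
      \<and> H (Rz (t0+h)) (t0+h) - H r0 (t0+h) = (Rz (t0+h) - r0) * Hr (xi h) (t0+h)"
    by metis
  have "\<forall>h. \<exists>z. min t0 (t0+h) \<le> z \<and> z \<le> max t0 (t0+h) \<and> H r0 (t0+h) - H r0 t0 = (t0 + h - t0) * Hp r0 z"
    by (intro allI mvt_gen[where f = "\<lambda>t. H r0 t"] dH_t)
  then obtain eta where eta: "\<And>h. min t0 (t0+h) \<le> eta h \<and> eta h \<le> max t0 (t0+h) \<and> H r0 (t0+h) - H r0 t0 = h * Hp r0 (eta h)"
    by (metis add_diff_cancel_left')
  have q: "\<forall>\<^sub>F h in at 0. (Rz (t0+h) - Rz t0) / h = - Hp r0 (eta h) / Hr (xi h) (t0+h)"
    using ev
  proof eventually_elim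
    case (elim h)
    then have h: "0 < t0+h" "t0+h < pi" "h \<noteq> 0" by auto
    have z: "H (Rz (t0+h)) (t0+h) = 0" "Rz (t0+h) > 0" using Rz h by auto
    have xp: "xi h > 0" using xi[OF h(1,2)] z r0 by (smt (verit))
    have hp: "Hr (xi h) (t0+h) > 0" using Hr_pos xp h by auto
    have "0 = (Rz (t0+h) - r0) * Hr (xi h) (t0+h) + h * Hp r0 (eta h)"
      using xi[OF h(1,2)] eta[of h] z r0 by linarith
    then show ?case using hp h unfolding r0_def by (simp add: field_simps)
  qed
  have lxi: "(xi \<longlongrightarrow> r0) (at 0)"
  proof (rule squeeze)
    show "\<forall>\<^sub>F h in at 0. \<bar>xi h - r0\<bar> \<le> \<bar>Rz (t0+h) - r0\<bar>"
      using ev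
    proof eventually_elim
      case (elim h)
      then have h: "0 < t0+h" "t0+h < pi" by auto
      show ?case using xi[OF h] by (auto simp: min_def max_def abs_le_iff split: if_splits)
    qed
    have "((\<lambda>h. Rz (t0+h)) \<longlongrightarrow> r0) (at 0)" using Rz_cont[OF t0] unfolding r0_def by (simp add: isCont_iff)
    then have "((\<lambda>h. Rz (t0+h) - r0) \<longlongrightarrow> 0) (at 0)" by (simp add: LIM_zero)
    then show "((\<lambda>h. \<bar>Rz (t0+h) - r0\<bar>) \<longlongrightarrow> 0) (at 0)" using tendsto_rabs by fastforce
  qed
  have leta: "(eta \<longlongrightarrow> t0) (at 0)"
  proof (rule squeeze)
    show "\<forall>\<^sub>F h in at 0. \<bar>eta h - t0\<bar> \<le> \<bar>h\<bar>"
    proof (intro always_eventually allI)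
      fix h
      show "\<bar>eta h - t0\<bar> \<le> \<bar>h\<bar>" using eta[of h] by (auto simp: min_def max_def abs_le_iff split: if_splits)
    qed
    show "((\<lambda>h. \<bar>h\<bar>) \<longlongrightarrow> 0) (at (0::real))" by (intro tendsto_eq_intros) auto
  qed
  have lt: "((\<lambda>h. t0 + h) \<longlongrightarrow> t0) (at (0::real))" by (intro tendsto_eq_intros) auto
  have "((\<lambda>h. - Hp r0 (eta h) / Hr (xi h) (t0+h)) \<longlongrightarrow> - Hp r0 t0 / Hr r0 t0) (at 0)"
    unfolding Hp_def Hr_def using Hr_pos[OF r0(1) t0] r0 unfolding Hr_def
    by (intro tendsto_intros lxi leta lt) auto
  note L = this
  have "((\<lambda>h. (Rz (t0+h) - Rz t0) / h) \<longlongrightarrow> - Hp r0 t0 / Hr r0 t0) (at 0)"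
    apply (rule Lim_transform_eventually[OF L])
    using q by eventually_elim simp
  then show ?thesis unfolding r0_def DERIV_def by simp
qed

end


context prm begin

definition A :: "real \<Rightarrow> real" where "A t = X (Rz t) t"

definition Ad :: "real \<Rightarrow> real" where
  "Ad t = Xr (Rz t) t * (- Hp (Rz t) t / Hr (Rz t) t) + Xp (Rz t) t"

lemma A_deriv: "0 < t \<Longrightarrow> t < pi \<Longrightarrow> (A has_real_derivative Ad t) (at t)"
  unfolding A_def Ad_def
  by (rule dX[OF Rz_deriv]) (auto intro: Rz)

lemma Ad_pos: assumes "0 < t" "t < pi" shows "Ad t > 0"
proof -
  define r where "r = Rz t"
  have r: "r > 0" "H r t = 0" using Rz assms unfolding r_def by auto
  have hr: "Hr r t > 0" using Hr_pos r assms by auto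
  have "Ad t = r powr (q1-q2-1) * (Hp r t * Hp r t / Hr r t) + r powr (q1-q2+1) * Hr r t"
    unfolding Ad_def r_def[symmetric] Xr_eq[OF r(1)] Xp_eq[OF r(1)] r(2) by (simp add: algebra_simps)
  also have "\<dots> > 0"
  proof -
    have "Hp r t * Hp r t \<ge> 0" by simp
    then have "Hp r t * Hp r t / Hr r t \<ge> 0" using hr by simp
    then have "r powr (q1-q2-1) * (Hp r t * Hp r t / Hr r t) \<ge> 0" by (rule mult_nonneg_nonneg[OF powr_ge_zero])
    moreover have "r powr (q1-q2+1) * Hr r t > 0" using r hr by simp
    ultimately show ?thesis by linarith
  qed
  finally show ?thesis .
qed

lemma A_mono: assumes "0 < x" "x < y" "y < pi" shows "A x < A y"
proof -
  obtain z where "z > x" "z < y" "A y - A x = (y - x) * Ad z"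
    using MVT2[of x y A Ad] A_deriv assms by force
  moreover have "Ad z > 0" using Ad_pos calculation assms by auto
  ultimately show ?thesis using assms by (smt (verit) mult_pos_pos)
qed

lemma A_cont: "0 < t \<Longrightarrow> t < pi \<Longrightarrow> isCont A t"
  using A_deriv DERIV_isCont by blast

lemma dX_r: "r > 0 \<Longrightarrow> ((\<lambda>r. X r t) has_real_derivative Xr r t) (at r)"
  unfolding X_def Xr_def
  by (rule derivative_eq_intros refl | simp)+

lemma Hp0_form: "Hp r 0 = q1 * r powr q2 - (c*q2) * r powr (-q1) - b*(q2-q1)"
  unfolding Hp_def by simp

definition r0 :: real where "r0 = (THE r. r > 0 \<and> Hp r 0 = 0)"

lemma Hp0_mono: "0 < x \<Longrightarrow> x < y \<Longrightarrow> Hp x 0 < Hp y 0"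
  unfolding Hp0_form using q1 q12 cpos by (intro pw_mono) auto

lemma r0: "r0 > 0" "Hp r0 0 = 0"
proof -
  obtain r where r: "r > 0" "Hp r 0 = 0" unfolding Hp0_form using q1 q12 cpos pw_zero[of q1 "c*q2" q1 q2] by auto
  have "r0 = r" unfolding r0_def
  proof (rule the_equality)
    fix y assume "0 < y \<and> Hp y 0 = 0"
    then show "y = r" using r Hp0_mono[of y r] Hp0_mono[of r y] by (cases y r rule: linorder_cases) auto
  qed (use r in auto)
  then show "r0 > 0" "Hp r0 0 = 0" using r by auto
qed

lemma Rz_lim0: "(Rz \<longlongrightarrow> r0) (at_right 0)"
proof (rule track[where g = "\<lambda>s r. H r s / s" and gl = "\<lambda>r. Hp r 0"])
  show "\<forall>\<^sub>F s in at_right 0. 0 < Rz s \<and> H (Rz s) s / s = 0 \<and> (\<forall>x y. 0 < x \<longrightarrow> x < y \<longrightarrow> H x s / s < H y s / s)"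
    using eventually_at_right_real[of 0 pi, OF pi_gt_zero]
    by eventually_elim (use Rz H_mono in \<open>auto intro: divide_strict_right_mono\<close>)
  fix r :: real assume "r > 0"
  have "((\<lambda>h. (H r (0+h) - H r 0) / h) \<longlongrightarrow> Hp r 0) (at 0)"
    using dH_t[of r 0] by (simp add: DERIV_def)
  then have "((\<lambda>s. H r s / s) \<longlongrightarrow> Hp r 0) (at 0)" by (simp add: H_def)
  then show "((\<lambda>s. H r s / s) \<longlongrightarrow> Hp r 0) (at_right 0)"
    by (rule tendsto_mono[OF at_within_le_at])
qed (use r0 Hp0_mono in auto)

definition L :: real where "L = X r0 0"

lemma A_lim0: "(A \<longlongrightarrow> L) (at_right 0)"
proof -
  have "((\<lambda>s. X (Rz s) s) \<longlongrightarrow> X r0 0) (at_right 0)"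
    unfolding X_def using r0(1)
    by (intro tendsto_intros Rz_lim0) auto
  then show ?thesis unfolding A_def L_def .
qed

lemma A_gt_L: assumes "0 < t" "t < pi" shows "A t > L"
proof -
  have "L \<le> A (t/2)"
  proof (rule tendsto_upperbound[OF A_lim0])
    show "\<forall>\<^sub>F s in at_right 0. A s \<le> A (t/2)"
      using eventually_at_right_real[of 0 "t/2"] assms
      by (auto elim!: eventually_mono intro!: less_imp_le A_mono)
  qed simp
  also have "\<dots> < A t" using A_mono assms by auto
  finally show ?thesis .
qed

lemma h_le_L: assumes "x > 0" shows "X x 0 \<le> L"
proof (cases x r0 rule: linorder_cases)
  case less
  then obtain z where z: "z > x" "z < r0" "X r0 0 - X x 0 = (r0 - x) * Xr z 0"
    using MVT2[of x r0 "\<lambda>r. X r 0" "\<lambda>r. Xr r 0"] dX_r assms by force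
  have "Hp z 0 < 0" using Hp0_mono[of z r0] r0 z assms by auto
  then have "Xr z 0 > 0" using Xr_eq[of z 0] z assms by (simp add: mult_pos_neg)
  then show ?thesis using z less unfolding L_def by (smt (verit) mult_pos_pos)
next
  case equal then show ?thesis unfolding L_def by simp
next
  case greater
  then obtain z where z: "z > r0" "z < x" "X x 0 - X r0 0 = (x - r0) * Xr z 0"
    using MVT2[of r0 x "\<lambda>r. X r 0" "\<lambda>r. Xr r 0"] dX_r r0 by force
  have "Hp z 0 > 0" using Hp0_mono[of r0 z] r0 z by auto
  then have "Xr z 0 < 0" using Xr_eq[of z 0] z r0 by (simp add: mult_pos_pos)
  then show ?thesis using z greater unfolding L_def by (smt (verit) mult_pos_neg)
qed

end


lemma rcis_half_pi: "rcis w (pi/2) = \<i> * complex_of_real w" "rcis w (-(pi/2)) = - \<i> * complex_of_real w"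
  by (simp_all add: rcis_def cis_pi_half mult.commute)

lemma cnj_rcis: "cnj (rcis r t) = rcis r (-t)"
  by (simp add: rcis_def complex_eq_iff)

context prm begin

lemma Delta0: "Delta q1 q2 a b c 0 = complex_of_real c"
  by (simp add: Delta_def)

lemma root_polar:
  assumes "r > 0" "-pi < t" "t \<le> pi"
  shows "Delta q1 q2 a b c (rcis r t) = 0 \<longleftrightarrow> X r t = a \<and> H r t = 0"
proof -
  have "rcis r t \<noteq> 0" using assms by simp
  then have "Delta q1 q2 a b c (rcis r t) = 0 \<longleftrightarrow> Complex (X r t) (- (r powr (q1-q2) * H r t)) = complex_of_real a"
    using Delta_zero_iff G_rcis[OF assms] by simp
  also have "\<dots> \<longleftrightarrow> X r t = a \<and> H r t = 0" using assms by (simp add: complex_eq_iff)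
  finally show ?thesis .
qed

lemma XH_neg: "X r (-t) = X r t" "H r (-t) = - H r t"
  unfolding X_def H_def by simp_all

lemma XD:
  assumes r: "r > 0" and h: "H r t = 0"
  shows "X r t * sin ((q2-q1)*t) = c * r powr (-q2) * sin (q1*t) - r powr q1 * sin (q2*t)"
proof -
  define u where "u = r powr q1"
  define v where "v = r powr q2"
  have uv: "u > 0" "v > 0" using r unfolding u_def v_def by auto
  define s1 where "s1 = sin (q1*t)"
  define s2 where "s2 = sin (q2*t)"
  define c1 where "c1 = cos (q1*t)"
  define c2 where "c2 = cos (q2*t)"
  define D where "D = sin ((q2-q1)*t)"
  define cd where "cd = cos ((q2-q1)*t)"
  have sq2: "s2 = s1 * cd + c1 * D"
  proof -
    have "q2*t = q1*t + (q2-q1)*t" by (simp add: algebra_simps)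
    then show ?thesis unfolding s2_def s1_def cd_def c1_def D_def by (metis sin_add)
  qed
  have sq1: "s1 = s2 * cd - c2 * D"
  proof -
    have "q1*t = q2*t - (q2-q1)*t" by (simp add: algebra_simps)
    then show ?thesis unfolding s2_def s1_def cd_def c2_def D_def by (metis sin_diff)
  qed
  have bD: "b * D = v * s1 - c * (1/u) * s2"
    using h unfolding H_def pows[OF r] u_def[symmetric] v_def[symmetric] s1_def s2_def D_def by simp
  have "X r t * D = -(u*c1*D + (u/v)*cd*(b*D) + c*(1/v)*c2*D)"
    unfolding X_def pows[OF r] u_def[symmetric] v_def[symmetric] c1_def cd_def c2_def D_def
    by (simp add: algebra_simps)
  also have "\<dots> = -(u*c1*D + (u/v)*cd*(v * s1 - c * (1/u) * s2) + c*(1/v)*c2*D)" by (simp only: bD)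
  also have "\<dots> = -(u*(s1*cd + c1*D)) + (c/v)*(s2*cd - c2*D)" using uv by (simp add: field_simps)
  also have "\<dots> = c * (1/v) * s1 - u * s2" using sq1 sq2 by simp
  finally show ?thesis unfolding D_def s1_def s2_def u_def v_def pows[OF r] by simp
qed

lemma nonneg_root:
  assumes "Delta q1 q2 a b c s = 0" "Re s \<ge> 0"
  obtains r t where "r > 0" "0 \<le> t" "t \<le> pi/2" "X r t = a" "H r t = 0" "Re s = r * cos t"
proof -
  have s0: "s \<noteq> 0" using assms Delta0 cpos by auto
  define r where "r = cmod s"
  define t where "t = Arg s"
  have r: "r > 0" using s0 r_def by simp
  have st: "s = rcis r t" unfolding r_def t_def by (simp add: rcis_cmod_Arg)
  have tb: "-pi < t" "t \<le> pi" unfolding t_def using Arg_bounded by auto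
  have re: "Re s = r * cos t" using st by simp
  have "cos t \<ge> 0" using re assms r by (simp add: zero_le_mult_iff)
  have tle: "\<bar>t\<bar> \<le> pi/2"
  proof (rule ccontr)
    assume "\<not> \<bar>t\<bar> \<le> pi/2"
    then have "pi/2 < \<bar>t\<bar>" "\<bar>t\<bar> < 3*pi/2" using tb by auto
    then have "cos \<bar>t\<bar> < 0" by (rule cos_lt_zero_pi)
    then show False using \<open>cos t \<ge> 0\<close> by (simp add: abs_if split: if_splits)
  qed
  have root: "X r t = a" "H r t = 0" using root_polar[OF r tb] assms st by auto
  have "X r \<bar>t\<bar> = a" "H r \<bar>t\<bar> = 0" using root XH_neg[of r t] by (auto simp: abs_if)
  moreover have "Re s = r * cos \<bar>t\<bar>" using re by (simp add: abs_if)
  ultimately show ?thesis using that[of r "\<bar>t\<bar>"] r tle by auto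
qed

lemma main_ineq:
  assumes "Delta q1 q2 a b c s = 0" "Re s \<ge> 0"
  shows "a \<le> A (pi/2) \<and> (a = A (pi/2) \<longrightarrow> Re s = 0)"
proof -
  obtain r t where rt: "r > 0" "0 \<le> t" "t \<le> pi/2" "X r t = a" "H r t = 0" "Re s = r * cos t"
    using nonneg_root[OF assms] by blast
  show ?thesis
  proof (cases "t = 0")
    case True
    then have "a \<le> L" using h_le_L rt by auto
    moreover have "L < A (pi/2)" using A_gt_L by simp
    ultimately show ?thesis by auto
  next
    case False
    then have t: "0 < t" "t < pi" using rt by auto
    then have "Rz t = r" using Rz_unique rt by auto
    then have a: "a = A t" using rt unfolding A_def by simp
    show ?thesis
    proof (cases "t = pi/2")
      case True
      then have "cos t = 0" "A t = A (pi/2)" by (simp_all only: True cos_pi_half)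
      then show ?thesis using a rt by simp
    next
      case False
      then have "A t < A (pi/2)" using A_mono t rt by auto
      then show ?thesis using a by auto
    qed
  qed
qed

lemma main_exist:
  assumes "a < A (pi/2)"
  shows "\<exists>s. Re s > 0 \<and> Delta q1 q2 a b c s = 0 \<and> Delta q1 q2 a b c (cnj s) = 0"
proof (cases "a \<le> L")
  case True
  define K where "K = \<bar>b\<bar> + \<bar>a\<bar> + 1"
  define M where "M = max (max r0 1) (K powr (1/q1))"
  have K: "K > 0" unfolding K_def by simp
  have M: "M \<ge> r0" "M \<ge> 1" "M \<ge> K powr (1/q1)" unfolding M_def by auto
  have "M powr q1 \<ge> (K powr (1/q1)) powr q1" using M q1 by (intro powr_mono2) auto
  then have Mq: "M powr q1 \<ge> K" using K q1 by (simp add: powr_powr)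
  have "M powr (q1-q2) \<le> M powr 0" using M q12 by (intro powr_mono) auto
  then have Mb: "M powr (q1-q2) \<le> 1" using M by simp
  have "b * M powr (q1-q2) \<ge> - \<bar>b\<bar>"
  proof -
    have "\<bar>b * M powr (q1-q2)\<bar> \<le> \<bar>b\<bar>" using Mb by (simp add: abs_mult mult_left_le)
    then show ?thesis by linarith
  qed
  moreover have "c * M powr (-q2) \<ge> 0" using cpos by simp
  ultimately have XM: "X M 0 < a" unfolding X_def using Mq unfolding K_def by simp
  have XL: "X r0 0 \<ge> a" using True unfolding L_def .
  have "continuous_on {r0..M} (\<lambda>x. X x 0)" unfolding X_def using r0
    by (intro continuous_intros) auto
  then obtain x where x: "x \<ge> r0" "x \<le> M" "X x 0 = a"
    using IVT2'[of "\<lambda>x. X x 0" M a r0] XM XL M by auto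
  have xp: "x > 0" using x r0 by simp
  have "Delta q1 q2 a b c (rcis x 0) = 0" using root_polar[of x 0] x xp by (simp add: H_def)
  then show ?thesis using xp by (intro exI[of _ "rcis x 0"]) (simp add: cnj_rcis)
next
  case False
  have "\<forall>\<^sub>F s in at_right 0. A s < a" using A_lim0 False by (intro order_tendstoD) auto
  moreover have "\<forall>\<^sub>F s in at_right 0. s \<in> {0<..<pi/2}" by (rule eventually_at_right_real) simp
  ultimately have "\<forall>\<^sub>F s in at_right 0. A s < a \<and> s \<in> {0<..<pi/2}" by (rule eventually_conj)
  then obtain p where p: "A p < a" "0 < p" "p < pi/2"
    using eventually_happens[of _ "at_right (0::real)"] trivial_limit_at_right_real by force
  have "continuous_on {p..pi/2} A" using p
    by (intro continuous_at_imp_continuous_on ballI A_cont) auto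
  then obtain f where f: "f \<ge> p" "f \<le> pi/2" "A f = a"
    using IVT'[of A p a "pi/2"] p assms by auto
  have f2: "f \<noteq> pi/2"
  proof
    assume ff: "f = pi/2"
    then have "A f = A (pi/2)" by (simp only: ff)
    then show False using f assms by simp
  qed
  have f0: "0 < f" "f < pi/2" using f f2 p by auto
  define r where "r = Rz f"
  have r: "r > 0" "H r f = 0" "X r f = a" using Rz[of f] f0 f unfolding r_def A_def by auto
  have "Delta q1 q2 a b c (rcis r f) = 0" using root_polar[of r f] r f0 by simp
  moreover have "Delta q1 q2 a b c (rcis r (-f)) = 0" using root_polar[of r "-f"] r f0 XH_neg by simp
  moreover have "Re (rcis r f) > 0" using r f0 by (simp add: cos_gt_zero_pi)
  ultimately show ?thesis by (intro exI[of _ "rcis r f"]) (simp add: cnj_rcis)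
qed

end


context prm begin

lemma sD: "sin ((q2 - q1) * pi / 2) > 0" "sin (q1 * pi / 2) > 0" "sin (q2 * pi / 2) > 0"
  using sinpos[of "pi/2"] by simp_all

lemma beq:
  assumes w: "w > 0"
  shows "(b = rho1 q1 q2 * w powr q2 - c * rho2 q1 q2 * w powr (-q1)) \<longleftrightarrow> H w (pi/2) = 0"
proof -
  have "H w (pi/2) = w powr q2 * sin (q1 * pi / 2) - c * w powr (-q1) * sin (q2 * pi / 2) - b * sin ((q2 - q1) * pi / 2)"
    unfolding H_def by simp
  then show ?thesis unfolding rho1_def rho2_def using sD by (auto simp: field_simps)
qed

lemma aeq:
  assumes w: "w > 0" and h: "H w (pi/2) = 0"
  shows "c * rho1 q1 q2 * w powr (-q2) - rho2 q1 q2 * w powr q1 = X w (pi/2)"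
proof -
  have "X w (pi/2) * sin ((q2 - q1) * pi / 2) = c * w powr (-q2) * sin (q1 * pi / 2) - w powr q1 * sin (q2 * pi / 2)"
    using XD[OF w h] by simp
  then show ?thesis unfolding rho1_def rho2_def using sD by (auto simp: field_simps)
qed

lemma astar_eq: "astar b c q1 q2 = A (pi/2)"
proof -
  define w where "w = Rz (pi/2)"
  have w: "w > 0" "H w (pi/2) = 0" using Rz[of "pi/2"] unfolding w_def by auto
  show ?thesis unfolding astar_def
  proof (rule the_equality)
    show "\<exists>w>0. b = rho1 q1 q2 * w powr q2 - c * rho2 q1 q2 * w powr (-q1) \<and>
               A (pi/2) = c * rho1 q1 q2 * w powr (-q2) - rho2 q1 q2 * w powr q1"
      using w beq aeq unfolding A_def w_def[symmetric] by (intro exI[of _ w]) auto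
  next
    fix a assume "\<exists>w>0. b = rho1 q1 q2 * w powr q2 - c * rho2 q1 q2 * w powr (-q1) \<and>
               a = c * rho1 q1 q2 * w powr (-q2) - rho2 q1 q2 * w powr q1"
    then obtain v where v: "v > 0" "b = rho1 q1 q2 * v powr q2 - c * rho2 q1 q2 * v powr (-q1)"
      "a = c * rho1 q1 q2 * v powr (-q2) - rho2 q1 q2 * v powr q1" by blast
    have hv: "H v (pi/2) = 0" using beq v by auto
    then have "Rz (pi/2) = v" using Rz_unique[of "pi/2" v] v by simp
    then show "a = A (pi/2)" using v aeq[OF v(1) hv] unfolding A_def by simp
  qed
qed

lemma imag_roots:
  "(\<exists>w::real. w > 0 \<and> Delta q1 q2 a b c (\<i> * complex_of_real w) = 0
       \<and> Delta q1 q2 a b c (- \<i> * complex_of_real w) = 0) \<longleftrightarrow> a = A (pi/2)"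
proof
  assume "\<exists>w::real. w > 0 \<and> Delta q1 q2 a b c (\<i> * complex_of_real w) = 0
       \<and> Delta q1 q2 a b c (- \<i> * complex_of_real w) = 0"
  then obtain w where w: "w > 0" "Delta q1 q2 a b c (rcis w (pi/2)) = 0" using rcis_half_pi by auto
  then have "X w (pi/2) = a" "H w (pi/2) = 0" using root_polar[of w "pi/2"] by auto
  moreover have "Rz (pi/2) = w" using Rz_unique[of "pi/2" w] w calculation by simp
  ultimately show "a = A (pi/2)" unfolding A_def by simp
next
  assume a: "a = A (pi/2)"
  define w where "w = Rz (pi/2)"
  have w: "w > 0" "H w (pi/2) = 0" "X w (pi/2) = a" using Rz[of "pi/2"] a unfolding w_def A_def by auto
  have "Delta q1 q2 a b c (rcis w (pi/2)) = 0" using root_polar[of w "pi/2"] w by simp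
  moreover have "Delta q1 q2 a b c (rcis w (-(pi/2))) = 0"
  proof -
    have "X w (-(pi/2)) = a" "H w (-(pi/2)) = 0" using w XH_neg[of w "pi/2"] by simp_all
    moreover have "-pi < -(pi/2)" "-(pi/2) \<le> pi" using pi_gt_zero by linarith+
    ultimately show ?thesis using root_polar[of w "-(pi/2)"] w by blast
  qed
  ultimately show "\<exists>w::real. w > 0 \<and> Delta q1 q2 a b c (\<i> * complex_of_real w) = 0
       \<and> Delta q1 q2 a b c (- \<i> * complex_of_real w) = 0"
    using w rcis_half_pi by (intro exI[of _ w]) auto
qed

lemma part_a:
  assumes "a \<ge> 0" "b \<ge> 0" "Delta q1 q2 a b c s = 0"
  shows "Re s < 0"
proof (rule ccontr)
  assume "\<not> Re s < 0"
  then have "Re s \<ge> 0" by simp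
  then obtain r t where rt: "r > 0" "0 \<le> t" "t \<le> pi/2" "X r t = a" "H r t = 0"
    by (rule nonneg_root[OF assms(3)])
  show False
  proof (cases "t = 0")
    case True
    have p: "r powr q1 > 0" "b * r powr (q1-q2) \<ge> 0" "c * r powr (-q2) > 0" using rt cpos assms by simp_all
    have "X r 0 = -(r powr q1 + b * r powr (q1-q2) + c * r powr (-q2))" unfolding X_def by simp
    then have "X r 0 < 0" using p by linarith
    then show False using rt True assms by simp
  next
    case False
    then have t: "0 < t" "t < pi" using rt by auto
    define u where "u = r powr q1"
    define v where "v = r powr q2"
    have uv: "u > 0" "v > 0" using rt unfolding u_def v_def by auto
    have s: "sin (q1*t) > 0" "sin (q2*t) > 0" "sin ((q2-q1)*t) > 0" using sinpos t by auto
    have s12: "sin (q1*t) < sin (q2*t)"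
    proof (rule sin_monotone_2pi)
      have "0 < q1*t" using q1 t by simp
      then show "- (pi/2) \<le> q1*t" using pi_gt_zero by linarith
      show "q1*t < q2*t" using q12 t by simp
      have "q2*t \<le> 1 * t" using q2 t by (intro mult_right_mono) auto
      then show "q2*t \<le> pi/2" using rt by simp
    qed
    have e1: "a * sin ((q2-q1)*t) = c * (1/v) * sin (q1*t) - u * sin (q2*t)"
      using XD[OF rt(1,5)] rt unfolding pows[OF rt(1)] u_def v_def by simp
    have e2: "b * sin ((q2-q1)*t) = v * sin (q1*t) - c * (1/u) * sin (q2*t)"
      using rt(5) unfolding H_def pows[OF rt(1)] u_def v_def by simp
    have "a * sin ((q2-q1)*t) \<ge> 0" "b * sin ((q2-q1)*t) \<ge> 0" using assms s by simp_all
    then have "c * (1/v) * sin (q1*t) - u * sin (q2*t) \<ge> 0" using e1 by linarith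
    then have "(c * (1/v) * sin (q1*t) - u * sin (q2*t)) * v \<ge> 0" using uv by simp
    moreover have "(c * (1/v) * sin (q1*t) - u * sin (q2*t)) * v = c * sin (q1*t) - (u * v) * sin (q2*t)"
      using uv by (simp add: algebra_simps)
    ultimately have i1: "c * sin (q1*t) \<ge> (u * v) * sin (q2*t)" by linarith
    have "v * sin (q1*t) - c * (1/u) * sin (q2*t) \<ge> 0" using e2 \<open>b * sin ((q2-q1)*t) \<ge> 0\<close> by linarith
    then have "(v * sin (q1*t) - c * (1/u) * sin (q2*t)) * u \<ge> 0" using uv by simp
    moreover have "(v * sin (q1*t) - c * (1/u) * sin (q2*t)) * u = (u * v) * sin (q1*t) - c * sin (q2*t)"
      using uv by (simp add: algebra_simps)
    ultimately have i2: "(u * v) * sin (q1*t) \<ge> c * sin (q2*t)" by linarith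
    have "(u * v) * sin (q1*t) < (u * v) * sin (q2*t)" using uv s12 by simp
    moreover have "c * sin (q1*t) < c * sin (q2*t)" using cpos s12 by simp
    ultimately show False using i1 i2 by linarith
  qed
qed

end


lemma i_rcis: "y \<noteq> 0 \<Longrightarrow> \<i> * complex_of_real y = rcis \<bar>y\<bar> (if y > 0 then pi/2 else -(pi/2))"
  using rcis_half_pi[of "\<bar>y\<bar>"] by (auto simp: abs_if)

lemma Re_ipowr:
  assumes "y \<noteq> 0"
  shows "Re ((\<i> * complex_of_real y) powr complex_of_real p) = \<bar>y\<bar> powr p * cos (p*pi/2)"
proof -
  define sg where "sg = (if y > 0 then pi/2 else -(pi/2))"
  have pp: "-(pi/2) \<le> pi" "-pi < -(pi/2)" "-pi < pi/2" "pi/2 \<le> pi" using pi_gt_zero by linarith+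
  have "sg = pi/2 \<or> sg = -(pi/2)" unfolding sg_def by simp
  then have sg: "-pi < sg" "sg \<le> pi" using pi_gt_zero by (elim disjE; linarith)+
  have "(\<i> * complex_of_real y) powr complex_of_real p = rcis (\<bar>y\<bar> powr p) (p * sg)"
    unfolding i_rcis[OF assms] sg_def[symmetric] using assms sg by (intro powr_rcis) auto
  moreover have "cos (p * sg) = cos (p*pi/2)" unfolding sg_def by simp
  ultimately show ?thesis by simp
qed

lemma cos_shift: "cos ((p - 1) * pi / 2) = sin (p * pi / 2)"
proof -
  have "(p - 1) * pi / 2 = p * pi / 2 - pi / 2" by (simp add: left_diff_distrib diff_divide_distrib)
  then show ?thesis by (simp only: cos_diff cos_pi_half sin_pi_half) simp?
qed

lemma Re_lin: "Re (-(complex_of_real a1 * P + complex_of_real b1 * (complex_of_real k * Q) + complex_of_real c1 * (complex_of_real m * T)))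
   = -(a1 * Re P + b1 * (k * Re Q) + c1 * (m * Re T))"
  by simp

context prm begin

definition Gd :: "complex \<Rightarrow> complex" where
  "Gd s = -(complex_of_real q1 * s powr complex_of_real (q1 - 1)
     + complex_of_real b * (complex_of_real (q1-q2) * s powr complex_of_real (q1 - q2 - 1))
     + complex_of_real c * (complex_of_real (-q2) * s powr complex_of_real (-q2 - 1)))"

lemma G_deriv:
  assumes "s \<notin> \<real>\<^sub>\<le>\<^sub>0"
  shows "(G has_field_derivative Gd s) (at s)"
proof -
  have d: "((\<lambda>z. z powr complex_of_real p) has_field_derivative (complex_of_real p * s powr complex_of_real (p - 1))) (at s)" for p
    using has_field_derivative_powr[OF assms, of "complex_of_real p"] by simp
  show ?thesis unfolding G_def Gd_def
    by (intro DERIV_minus DERIV_add DERIV_cmult d)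
qed

lemma Re_Gd:
  assumes y: "y \<noteq> 0" and h: "H \<bar>y\<bar> (pi/2) = 0"
  shows "Re (Gd (\<i> * complex_of_real y)) < 0"
proof -
  define r where "r = \<bar>y\<bar>"
  have r: "r > 0" using y unfolding r_def by simp
  define u where "u = r powr q1"
  define v where "v = r powr q2"
  have uv: "u > 0" "v > 0" using r unfolding u_def v_def by auto
  define s1 where "s1 = sin (q1 * pi / 2)"
  define s2 where "s2 = sin (q2 * pi / 2)"
  define sd where "sd = sin ((q2 - q1) * pi / 2)"
  have ss: "s1 > 0" "s2 > 0" using sD unfolding s1_def s2_def by auto
  have m1: "sin ((q1 - q2) * pi / 2) = - sd" unfolding sd_def
    by (metis minus_diff_eq mult_minus_left sin_minus minus_divide_left)
  have m2: "sin ((- q2) * pi / 2) = - s2" unfolding s2_def by simp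
  have "Re (Gd (\<i> * complex_of_real y)) = -(q1 * r powr (q1-1) * s1 + b*(q1-q2) * r powr (q1-q2-1) * sin ((q1 - q2) * pi / 2)
      + c * (-q2) * r powr (-q2-1) * sin ((- q2) * pi / 2))"
  proof -
    have e1: "Re ((\<i> * complex_of_real y) powr complex_of_real (q1 - 1)) = r powr (q1-1) * s1"
      by (simp only: Re_ipowr[OF y] cos_shift r_def s1_def)
    have e2: "Re ((\<i> * complex_of_real y) powr complex_of_real (q1 - q2 - 1)) = r powr (q1-q2-1) * sin ((q1 - q2) * pi / 2)"
      by (simp only: Re_ipowr[OF y] cos_shift r_def)
    have e3: "Re ((\<i> * complex_of_real y) powr complex_of_real (- q2 - 1)) = r powr (-q2-1) * sin ((- q2) * pi / 2)"
      by (simp only: Re_ipowr[OF y] cos_shift r_def)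
    show ?thesis unfolding Gd_def Re_lin e1 e2 e3 by (simp add: algebra_simps)
  qed
  also have "\<dots> = -(q1 * r powr (q1-1) * s1 + (q2-q1) * r powr (q1-q2-1) * (b * sd)
      + c * q2 * r powr (-q2-1) * s2)"
    unfolding m1 m2 by (simp add: algebra_simps)
  also have "b * sd = v * s1 - c * (1/u) * s2"
    using h unfolding H_def r_def[symmetric] pows[OF r] u_def[symmetric] v_def[symmetric] s1_def s2_def sd_def
    by simp
  also have "-(q1 * r powr (q1-1) * s1 + (q2-q1) * r powr (q1-q2-1) * (v * s1 - c * (1/u) * s2)
      + c * q2 * r powr (-q2-1) * s2) = -(q2 * u * s1 / r + q1 * c * s2 / (v * r))"
    unfolding pows[OF r] u_def[symmetric] v_def[symmetric] using uv r by (simp add: field_simps)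
  also have "\<dots> < 0"
  proof -
    have "q2 * u * s1 / r > 0" "q1 * c * s2 / (v * r) > 0" using uv r ss q1 q12 cpos by simp_all
    then show ?thesis by linarith
  qed
  finally show ?thesis .
qed

lemma part_c:
  assumes ev: "\<forall>\<^sub>F x in nhds a0. Delta q1 q2 x b c (S x) = 0"
    and dS: "(S has_vector_derivative S') (at a0)"
    and re: "Re (S a0) = 0"
  shows "Re S' < 0"
proof -
  have root0: "Delta q1 q2 a0 b c (S a0) = 0" using eventually_nhds_x_imp_x[OF ev] .
  have nz: "z \<noteq> 0" if "Delta q1 q2 a b c z = 0" for a z
  proof
    assume "z = 0"
    then have "Delta q1 q2 a b c z = complex_of_real c" using Delta0 by simp
    then show False using that cpos by simp
  qed
  define y where "y = Im (S a0)"
  have Sy: "S a0 = \<i> * complex_of_real y" using re unfolding y_def by (simp add: complex_eq_iff)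
  have y: "y \<noteq> 0" using nz[OF root0] Sy by auto
  have hy: "H \<bar>y\<bar> (pi/2) = 0"
  proof -
    define sg where "sg = (if y > 0 then pi/2 else -(pi/2))"
    have "sg = pi/2 \<or> sg = -(pi/2)" unfolding sg_def by simp
    then have sgb: "-pi < sg" "sg \<le> pi" using pi_gt_zero by (elim disjE; linarith)+
    have "S a0 = rcis \<bar>y\<bar> sg" using Sy i_rcis[OF y] unfolding sg_def by simp
    then have "H \<bar>y\<bar> sg = 0" using root_polar[of "\<bar>y\<bar>" sg a0] root0 y sgb by auto
    then show ?thesis unfolding sg_def using XH_neg(2)[of "\<bar>y\<bar>" "pi/2"] by (auto split: if_splits)
  qed
  have gd: "Re (Gd (S a0)) < 0" using Re_Gd[OF y hy] Sy by simp
  have notnp: "S a0 \<notin> \<real>\<^sub>\<le>\<^sub>0" using Sy y by (auto simp: complex_nonpos_Reals_iff)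
  have ch: "((G \<circ> S) has_vector_derivative S' * Gd (S a0)) (at a0)"
    by (rule field_vector_diff_chain_at[OF dS G_deriv[OF notnp]])
  have evG: "\<forall>\<^sub>F x in nhds a0. (G \<circ> S) x = complex_of_real x"
    using ev
  proof eventually_elim
    case (elim x)
    have "S x \<noteq> 0" using nz[OF elim] .
    then show ?case using Delta_zero_iff[of "S x" x] elim by simp
  qed
  have "((\<lambda>x. complex_of_real x) has_vector_derivative S' * Gd (S a0)) (at a0)"
    unfolding has_vector_derivative_def
  proof (rule has_derivative_transform_eventually[where f = "G \<circ> S"])
    show "((G \<circ> S) has_derivative (\<lambda>x. x *\<^sub>R (S' * Gd (S a0)))) (at a0)"
      using ch unfolding has_vector_derivative_def .
    show "\<forall>\<^sub>F x' in at a0. (G \<circ> S) x' = complex_of_real x'"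
      unfolding eventually_at_filter using evG by (auto elim: eventually_mono)
    show "(G \<circ> S) a0 = complex_of_real a0" using eventually_nhds_x_imp_x[OF evG] .
  qed simp
  moreover have "((\<lambda>x. complex_of_real x) has_vector_derivative 1) (at a0)"
    using has_vector_derivative_of_real[OF DERIV_ident, of "at a0"] by simp
  ultimately have e: "S' * Gd (S a0) = 1" by (rule vector_derivative_unique_at)
  have gnz: "Gd (S a0) \<noteq> 0" using gd by auto
  then have "S' = inverse (Gd (S a0))" using e by (simp add: field_simps)
  then have "Re S' = Re (Gd (S a0)) / ((Re (Gd (S a0)))\<^sup>2 + (Im (Gd (S a0)))\<^sup>2)" by simp
  moreover have "(Re (Gd (S a0)))\<^sup>2 + (Im (Gd (S a0)))\<^sup>2 > 0" using gd
    by (simp add: add_pos_nonneg)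
  ultimately show ?thesis using gd by (simp add: divide_neg_pos)
qed

end


lemma part1:
  fixes q1 q2 a b c :: real
  assumes q: "0 < q1" "q1 < q2" "q2 < 1" and c: "c < 0"
  shows "\<exists>x::real. x > 0 \<and> Delta q1 q2 a b c (complex_of_real x) = 0"
proof -
  define f where "f x = x powr (q1+q2) + a * x powr q2 + b * x powr q1 + c" for x
  have Df: "Delta q1 q2 a b c (complex_of_real x) = complex_of_real (f x)" if "x > 0" for x
    unfolding Delta_def f_def powr_of_real[OF less_imp_le[OF that]] by simp
  define K where "K = - c / (2 * (1 + \<bar>a\<bar> + \<bar>b\<bar>))"
  have "2 * (1 + \<bar>a\<bar> + \<bar>b\<bar>) > 0" by (simp add: add_pos_nonneg)
  then have K: "K > 0" unfolding K_def using c by (simp add: divide_neg_pos)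
  define lo where "lo = min 1 (K powr (1/q1))"
  have lo: "lo > 0" "lo \<le> 1" "lo \<le> K powr (1/q1)" unfolding lo_def using K by auto
  have "lo powr q1 \<le> (K powr (1/q1)) powr q1" using lo q by (intro powr_mono2) auto
  then have loK: "lo powr q1 \<le> K" using K q by (simp add: powr_powr)
  have flo: "f lo < 0"
  proof -
    define u where "u = lo powr q1"
    define v where "v = lo powr q2"
    have uv: "u > 0" "v > 0" "v \<le> u" "v \<le> 1" "u \<le> K"
      unfolding u_def v_def using lo q loK by (auto intro: powr_mono' powr_le1)
    have "f lo = u * v + a * v + b * u + c" unfolding f_def u_def v_def by (simp add: powr_add)
    also have "\<dots> \<le> u * 1 + \<bar>a\<bar> * u + \<bar>b\<bar> * u + c"
    proof -
      have "u * v \<le> u * 1" using uv by (intro mult_left_mono) auto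
      moreover have "a * v \<le> \<bar>a\<bar> * u"
      proof -
        have "a * v \<le> \<bar>a\<bar> * v" using uv by (intro mult_right_mono) auto
        also have "\<dots> \<le> \<bar>a\<bar> * u" using uv by (intro mult_left_mono) auto
        finally show ?thesis .
      qed
      moreover have "b * u \<le> \<bar>b\<bar> * u" using uv by (simp add: mult_right_mono)
      ultimately show ?thesis by linarith
    qed
    also have "\<dots> = u * (1 + \<bar>a\<bar> + \<bar>b\<bar>) + c" by (simp add: algebra_simps)
    also have "\<dots> \<le> K * (1 + \<bar>a\<bar> + \<bar>b\<bar>) + c" using uv by (intro add_right_mono mult_right_mono) auto
    also have "\<dots> = c / 2" unfolding K_def by (simp add: field_simps add_pos_nonneg)
    also have "\<dots> < 0" using c by simp
    finally show ?thesis .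
  qed
  define M where "M = \<bar>a\<bar> + \<bar>b\<bar> + \<bar>c\<bar> + 1"
  have M: "M > 0" unfolding M_def by (simp add: add_pos_nonneg)
  define hi where "hi = max 1 (M powr (1/q1))"
  have hi: "hi \<ge> 1" "hi \<ge> M powr (1/q1)" unfolding hi_def by auto
  have "hi powr q1 \<ge> (M powr (1/q1)) powr q1" using hi q by (intro powr_mono2) auto
  then have hiM: "hi powr q1 \<ge> M" using M q by (simp add: powr_powr)
  have fhi: "f hi > 0"
  proof -
    define u where "u = hi powr q1"
    define v where "v = hi powr q2"
    have uv: "u \<ge> 1" "v \<ge> 1" "u \<le> v" "u \<ge> M"
      unfolding u_def v_def using hi q hiM by (auto intro: powr_mono ge_one_powr_ge_zero)
    have "f hi = u * v + a * v + b * u + c" unfolding f_def u_def v_def by (simp add: powr_add)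
    also have "\<dots> \<ge> u * v - \<bar>a\<bar> * v - \<bar>b\<bar> * v + c"
    proof -
      have "a * v \<ge> - \<bar>a\<bar> * v" using uv by (intro mult_right_mono) auto
      moreover have "b * u \<ge> - \<bar>b\<bar> * v"
      proof -
        have "\<bar>b\<bar> * u \<le> \<bar>b\<bar> * v" using uv by (intro mult_left_mono) auto
        moreover have "b * u \<ge> - \<bar>b\<bar> * u" using uv by (intro mult_right_mono) auto
        ultimately show ?thesis by linarith
      qed
      ultimately show ?thesis by linarith
    qed
    also have "u * v - \<bar>a\<bar> * v - \<bar>b\<bar> * v + c = v * (u - \<bar>a\<bar> - \<bar>b\<bar>) + c" by (simp add: algebra_simps)
    also have "v * (u - \<bar>a\<bar> - \<bar>b\<bar>) + c \<ge> 1 * (\<bar>c\<bar> + 1) + c"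
    proof -
      have "u - \<bar>a\<bar> - \<bar>b\<bar> \<ge> \<bar>c\<bar> + 1" using uv unfolding M_def by simp
      then have "v * (u - \<bar>a\<bar> - \<bar>b\<bar>) \<ge> 1 * (\<bar>c\<bar> + 1)" using uv
        by (intro mult_mono) auto
      then show ?thesis by simp
    qed
    finally show ?thesis by simp
  qed
  have "lo \<le> hi" using lo hi by simp
  moreover have "continuous_on {lo..hi} f" unfolding f_def using lo
    by (intro continuous_intros) auto
  ultimately obtain x where x: "x \<ge> lo" "x \<le> hi" "f x = 0" using IVT'[of f lo 0 hi] flo fhi by auto
  then show ?thesis using Df[of x] lo by (intro exI[of _ x]) auto
qed

theorem proposition1:
  fixes q1 q2 a b c :: real
  assumes "0 < q1" and "q1 < q2" and "q2 < 1"
  shows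
   "(c < 0 \<longrightarrow> (\<exists>x::real. x > 0 \<and> Delta q1 q2 a b c (complex_of_real x) = 0))
    \<and> (Delta q1 q2 a b c 0 = 0 \<longleftrightarrow> c = 0)
    \<and> (c > 0 \<longrightarrow>
         ((a \<ge> 0 \<and> b \<ge> 0 \<longrightarrow> (\<forall>s. Delta q1 q2 a b c s = 0 \<longrightarrow> Re s < 0))
          \<and> ((\<exists>\<omega>::real. \<omega> > 0 \<and> Delta q1 q2 a b c (\<i> * complex_of_real \<omega>) = 0
                          \<and> Delta q1 q2 a b c (- \<i> * complex_of_real \<omega>) = 0)
              \<longleftrightarrow> a = astar b c q1 q2)
          \<and> (\<forall>(S :: real \<Rightarrow> complex) S'.
                (\<forall>\<^sub>F x in nhds (astar b c q1 q2). Delta q1 q2 x b c (S x) = 0)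
                \<and> (S has_vector_derivative S') (at (astar b c q1 q2))
                \<and> Re (S (astar b c q1 q2)) = 0
                \<longrightarrow> Re S' < 0)
          \<and> ((\<forall>s. Delta q1 q2 a b c s = 0 \<longrightarrow> Re s < 0) \<longleftrightarrow> a > astar b c q1 q2)
          \<and> ((\<exists>s. Re s > 0 \<and> Delta q1 q2 a b c s = 0 \<and> Delta q1 q2 a b c (cnj s) = 0)
              \<longleftrightarrow> a < astar b c q1 q2)))"
proof -
  have P1: "c < 0 \<longrightarrow> (\<exists>x::real. x > 0 \<and> Delta q1 q2 a b c (complex_of_real x) = 0)"
    using part1 assms by blast
  have P2: "Delta q1 q2 a b c 0 = 0 \<longleftrightarrow> c = 0" by (simp add: Delta_def)
  have P3: "c > 0 \<longrightarrow>
         ((a \<ge> 0 \<and> b \<ge> 0 \<longrightarrow> (\<forall>s. Delta q1 q2 a b c s = 0 \<longrightarrow> Re s < 0))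
          \<and> ((\<exists>\<omega>::real. \<omega> > 0 \<and> Delta q1 q2 a b c (\<i> * complex_of_real \<omega>) = 0
                          \<and> Delta q1 q2 a b c (- \<i> * complex_of_real \<omega>) = 0)
              \<longleftrightarrow> a = astar b c q1 q2)
          \<and> (\<forall>(S :: real \<Rightarrow> complex) S'.
                (\<forall>\<^sub>F x in nhds (astar b c q1 q2). Delta q1 q2 x b c (S x) = 0)
                \<and> (S has_vector_derivative S') (at (astar b c q1 q2))
                \<and> Re (S (astar b c q1 q2)) = 0
                \<longrightarrow> Re S' < 0)
          \<and> ((\<forall>s. Delta q1 q2 a b c s = 0 \<longrightarrow> Re s < 0) \<longleftrightarrow> a > astar b c q1 q2)
          \<and> ((\<exists>s. Re s > 0 \<and> Delta q1 q2 a b c s = 0 \<and> Delta q1 q2 a b c (cnj s) = 0)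
              \<longleftrightarrow> a < astar b c q1 q2))"
  proof
    assume cp: "c > 0"
    interpret prm q1 q2 b c using assms cp by unfold_locales
    have as: "astar b c q1 q2 = A (pi/2)" by (rule astar_eq)
    have pa: "a \<ge> 0 \<and> b \<ge> 0 \<longrightarrow> (\<forall>s. Delta q1 q2 a b c s = 0 \<longrightarrow> Re s < 0)"
      using part_a by blast
    have pb: "(\<exists>\<omega>::real. \<omega> > 0 \<and> Delta q1 q2 a b c (\<i> * complex_of_real \<omega>) = 0
                          \<and> Delta q1 q2 a b c (- \<i> * complex_of_real \<omega>) = 0)
              \<longleftrightarrow> a = astar b c q1 q2"
      unfolding as by (rule imag_roots)
    have pc: "\<forall>(S :: real \<Rightarrow> complex) S'.
                (\<forall>\<^sub>F x in nhds (astar b c q1 q2). Delta q1 q2 x b c (S x) = 0)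
                \<and> (S has_vector_derivative S') (at (astar b c q1 q2))
                \<and> Re (S (astar b c q1 q2)) = 0
                \<longrightarrow> Re S' < 0"
      using part_c by blast
    have pd: "(\<forall>s. Delta q1 q2 a b c s = 0 \<longrightarrow> Re s < 0) \<longleftrightarrow> a > astar b c q1 q2"
    proof
      assume all: "\<forall>s. Delta q1 q2 a b c s = 0 \<longrightarrow> Re s < 0"
      show "a > astar b c q1 q2"
      proof (rule ccontr)
        assume "\<not> a > astar b c q1 q2"
        then have "a < A (pi/2) \<or> a = A (pi/2)" unfolding as by auto
        then show False
        proof
          assume "a < A (pi/2)"
          then obtain s where "Re s > 0" "Delta q1 q2 a b c s = 0" using main_exist by blast
          then show False using all by force
        next
          assume "a = A (pi/2)"
          then obtain w :: real where "w > 0" "Delta q1 q2 a b c (\<i> * complex_of_real w) = 0"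
            using imag_roots by blast
          then show False using all by force
        qed
      qed
    next
      assume a: "a > astar b c q1 q2"
      show "\<forall>s. Delta q1 q2 a b c s = 0 \<longrightarrow> Re s < 0"
      proof (intro allI impI)
        fix s assume r: "Delta q1 q2 a b c s = 0"
        show "Re s < 0"
        proof (rule ccontr)
          assume "\<not> Re s < 0"
          then have "a \<le> A (pi/2)" using main_ineq[OF r] by auto
          then show False using a as by simp
        qed
      qed
    qed
    have pe: "(\<exists>s. Re s > 0 \<and> Delta q1 q2 a b c s = 0 \<and> Delta q1 q2 a b c (cnj s) = 0)
              \<longleftrightarrow> a < astar b c q1 q2"
    proof
      assume "\<exists>s. Re s > 0 \<and> Delta q1 q2 a b c s = 0 \<and> Delta q1 q2 a b c (cnj s) = 0"
      then obtain s where s: "Re s > 0" "Delta q1 q2 a b c s = 0" by blast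
      then have "a \<le> A (pi/2) \<and> (a = A (pi/2) \<longrightarrow> Re s = 0)" using main_ineq by simp
      then show "a < astar b c q1 q2" using s as by auto
    next
      assume "a < astar b c q1 q2"
      then show "\<exists>s. Re s > 0 \<and> Delta q1 q2 a b c s = 0 \<and> Delta q1 q2 a b c (cnj s) = 0"
        using main_exist as by simp
    qed
    show "(a \<ge> 0 \<and> b \<ge> 0 \<longrightarrow> (\<forall>s. Delta q1 q2 a b c s = 0 \<longrightarrow> Re s < 0))
          \<and> ((\<exists>\<omega>::real. \<omega> > 0 \<and> Delta q1 q2 a b c (\<i> * complex_of_real \<omega>) = 0
                          \<and> Delta q1 q2 a b c (- \<i> * complex_of_real \<omega>) = 0)
              \<longleftrightarrow> a = astar b c q1 q2)
          \<and> (\<forall>(S :: real \<Rightarrow> complex) S'.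
                (\<forall>\<^sub>F x in nhds (astar b c q1 q2). Delta q1 q2 x b c (S x) = 0)
                \<and> (S has_vector_derivative S') (at (astar b c q1 q2))
                \<and> Re (S (astar b c q1 q2)) = 0
                \<longrightarrow> Re S' < 0)
          \<and> ((\<forall>s. Delta q1 q2 a b c s = 0 \<longrightarrow> Re s < 0) \<longleftrightarrow> a > astar b c q1 q2)
          \<and> ((\<exists>s. Re s > 0 \<and> Delta q1 q2 a b c s = 0 \<and> Delta q1 q2 a b c (cnj s) = 0)
              \<longleftrightarrow> a < astar b c q1 q2)"
      using pa pb pc pd pe by blast
  qed
  show ?thesis using P1 P2 P3 by blast
qed


end
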